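(* Under the standing setup, let $\hat V_\tau$ be the extended heuristic on all of $\mathbb R^D$. Then: (i) for every $t\in\{0,\dots,T-2\}$, $l\in\{0,\dots,k\}$, $s\in\mathbb R^D$ and $a\in\mathcal A'_{l,t}$, writing $(s_a,l_a)=F^+_{\tau,t}((s,l),a)$, $$\hat V_\tau(s,l,t)\ge R(s,a)+\hat V_\tau(s_a,l_a,t+1);$$ (ii) for every $l\in\{0,\dots,k\}$, $s\in\mathbb R^D$ and $a\in\mathcal A'_{l,T-1}$, $\hat V_\tau(s,l,T-1)\ge R(s,a)+\hat V_\tau(\cdot,k,T)=R(s,a)$. In other words, $\hat V_\tau$ is a consistent heuristic for the search graph whose nodes are $(s,l,t)$ and whose edges are labeled by $a\in\mathcal A'_{l,t}$, carry reward $R(s,a)$, and lead to $(s_a,l_a,t+1)$ (or to a goal node at time $T$ when $t=T-1$).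
   Context: Standing setup: state space $\mathcal S=\mathbb R^D$, finite action set $\mathcal A$, horizon $T\ge2$, noise space $\mathcal U$. A transition mechanism $g_S:\mathcal S\times\mathcal A\times\mathcal U\to\mathcal S$ is bijective in its last argument, with inverse $g_S^{-1}:\mathcal S\times\mathcal A\times\mathcal S\to\mathcal U$ satisfying $u=g_S^{-1}(s,a,s')$ whenever $s'=g_S(s,a,u)$. Reward $R:\mathcal S\times\mathcal A\to\mathbb R$. Lipschitz assumption: for each $a\in\mathcal A,u\in\mathcal U$ there is $K_{a,u}\ge0$ with $\|g_S(s,a,u)-g_S(s',a,u)\|\le K_{a,u}\|s-s'\|$, and for each $a$ there is $C_a\ge0$ with $|R(s,a)-R(s',a)|\le C_a\|s-s'\|$, for all $s,s'\in\mathcal S$ (Euclidean norm). An observed episode $\tau$ consists of states $s_0,\dots,s_{T-1}$ and actions $a_0,\dots,a_{T-1}$; put $u_t=g_S^{-1}(s_t,a_t,s_{t+1})$ for $t=0,\dots,T-2$. Fix a budget $k\in\{0,\dots,T\}$. For $t\le T-2$ define $F^+_{\tau,t}((s,l),a)=\big(g_S(s,a,u_t),\,l+\mathbf 1[a\ne a_t]\big)$. Constants: $K_{u_t}=\max_{a}K_{a,u_t}$, $C=\max_a C_a$, $L_{T-1}=C$, $L_t=C+L_{t+1}K_{u_t}$ for $t\le T-2$. For $l\in\{0,\dots,k\}$ and time $t$, let $\mathcal A'_{l,t}=\{a_t\}$ if $l=k$ and $\mathcal A'_{l,t}=\mathcal A$ if $l<k$. Let $\mathcal S_\dagger\subset\mathbb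 R^D$ be a finite nonempty anchor set. Anchor recursion (for $s\in\mathcal S_\dagger$): $\hat V_\tau(s,l,T-1)=\max_{a\in\mathcal A}R(s,a)$ for $l<k$ and $\hat V_\tau(s,k,T-1)=R(s,a_{T-1})$; for $t=T-2,\dots,0$, $\hat V_\tau(s,l,t)=\max_{a\in\mathcal A'_{l,t}}\{R(s,a)+\min_{s_\dagger\in\mathcal S_\dagger}\{\hat V_\tau(s_\dagger,l_a,t+1)+L_{t+1}\|s_\dagger-s_a\|\}\}$ with $(s_a,l_a)=F^+_{\tau,t}((s,l),a)$. Extended heuristic (for all $s\in\mathbb R^D$): $\hat V_\tau(s,l,T)=0$; $\hat V_\tau(s,l,T-1)=\max_{a\in\mathcal A'_{l,T-1}}R(s,a)$; and for $t\le T-2$, $\hat V_\tau(s,l,t)=\max_{a\in\mathcal A'_{l,t}}\{R(s,a)+\min_{s_\dagger\in\mathcal S_\dagger}\{\hat V_\tau(s_\dagger,l_a,t+1)+L_{t+1}\|s_\dagger-s_a\|\}\}$, where the values $\hat V_\tau(s_\dagger,\cdot,t+1)$ at anchors are those of the anchor recursion (which coincide with the extended formula on anchors). *)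

theory Defs
  imports "HOL-Analysis.Analysis"
begin

text \<open>States live in R^D, rendered as real^'d. Actions form a finite set A of type 'a,
  noise values have type 'u.\<close>

definition Aprime :: "'a set \<Rightarrow> (nat \<Rightarrow> 'a) \<Rightarrow> nat \<Rightarrow> nat \<Rightarrow> nat \<Rightarrow> 'a set" where
  "Aprime A acts k l t = (if l = k then {acts t} else A)"

text \<open>Counterfactual transition F^+_{tau,t}: state component and counter component.\<close>
definition Fstate :: "('s \<Rightarrow> 'a \<Rightarrow> 'u \<Rightarrow> 's) \<Rightarrow> (nat \<Rightarrow> 'u) \<Rightarrow> nat \<Rightarrow> 's \<Rightarrow> 'a \<Rightarrow> 's" where
  "Fstate g u t s a = g s a (u t)"

definition Fcount :: "(nat \<Rightarrow> 'a) \<Rightarrow> nat \<Rightarrow> nat \<Rightarrow> 'a \<Rightarrow> nat" where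
  "Fcount acts t l a = l + (if a \<noteq> acts t then 1 else 0)"

definition Cmax :: "'a set \<Rightarrow> ('a \<Rightarrow> real) \<Rightarrow> real" where
  "Cmax A Cl = Max (Cl ` A)"

definition Kmax :: "'a set \<Rightarrow> ('a \<Rightarrow> 'u \<Rightarrow> real) \<Rightarrow> (nat \<Rightarrow> 'u) \<Rightarrow> nat \<Rightarrow> real" where
  "Kmax A K u t = Max ((\<lambda>a. K a (u t)) ` A)"

function Lconst :: "'a set \<Rightarrow> ('a \<Rightarrow> real) \<Rightarrow> ('a \<Rightarrow> 'u \<Rightarrow> real) \<Rightarrow> (nat \<Rightarrow> 'u) \<Rightarrow> nat \<Rightarrow> nat \<Rightarrow> real" where
  "Lconst A Cl K u T t =
     (if T - 1 \<le> t then Cmax A Cl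
      else Cmax A Cl + Lconst A Cl K u T (Suc t) * Kmax A K u t)"
  by pat_completeness auto
termination
  by (relation "Wellfounded.measure (\<lambda>(A, Cl, K, u, T, t). T - t)") auto

text \<open>Extended heuristic hat V_tau(s,l,t) on all states, for t <= T
  (values for t > T are irrelevant and set to 0, as at t = T).\<close>
function Vhat :: "'a set \<Rightarrow> ('s::real_normed_vector \<Rightarrow> 'a \<Rightarrow> real) \<Rightarrow> ('s \<Rightarrow> 'a \<Rightarrow> 'u \<Rightarrow> 's)
    \<Rightarrow> (nat \<Rightarrow> 'u) \<Rightarrow> (nat \<Rightarrow> 'a) \<Rightarrow> nat \<Rightarrow> nat \<Rightarrow> 's set \<Rightarrow> (nat \<Rightarrow> real)
    \<Rightarrow> 's \<Rightarrow> nat \<Rightarrow> nat \<Rightarrow> real" where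
  "Vhat A R g u acts k T Sd L s l t =
     (if T \<le> t then 0
      else if t = T - 1 then Max ((\<lambda>a. R s a) ` Aprime A acts k l t)
      else Max ((\<lambda>a. R s a +
                 Min ((\<lambda>sd. Vhat A R g u acts k T Sd L sd (Fcount acts t l a) (Suc t)
                             + L (Suc t) * norm (sd - Fstate g u t s a)) ` Sd))
               ` Aprime A acts k l t))"
  by pat_completeness auto
termination
  by (relation "Wellfounded.measure (\<lambda>(A, R, g, u, acts, k, T, Sd, L, s, l, t). T - t)") auto

end

theory Submission
  imports Defs
begin

declare Vhat.simps[simp del] Lconst.simps[simp del]


lemma max_diff:
  fixes f f' :: "'a \<Rightarrow> real"
  assumes "finite S" "S \<noteq> {}" "\<And>a. a \<in> S \<Longrightarrow> \<bar>f a - f' a\<bar> \<le> c"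
  shows "\<bar>Max (f ` S) - Max (f' ` S)\<bar> \<le> c"
proof -
  have "\<forall>a\<in>S. f a \<le> Max (f' ` S) + c"
  proof
    fix a assume a: "a \<in> S"
    hence "f' a \<le> Max (f' ` S)" using assms by auto
    thus "f a \<le> Max (f' ` S) + c" using assms(3)[OF a] by linarith
  qed
  hence 1: "Max (f ` S) \<le> Max (f' ` S) + c" using assms(1,2) by simp
  have "\<forall>a\<in>S. f' a \<le> Max (f ` S) + c"
  proof
    fix a assume a: "a \<in> S"
    hence "f a \<le> Max (f ` S)" using assms by auto
    thus "f' a \<le> Max (f ` S) + c" using assms(3)[OF a] by linarith
  qed
  hence 2: "Max (f' ` S) \<le> Max (f ` S) + c" using assms(1,2) by simp
  show ?thesis using 1 2 by linarith
qed

lemma min_diff: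
  fixes f f' :: "'a \<Rightarrow> real"
  assumes "finite S" "S \<noteq> {}" "\<And>a. a \<in> S \<Longrightarrow> \<bar>f a - f' a\<bar> \<le> c"
  shows "\<bar>Min (f ` S) - Min (f' ` S)\<bar> \<le> c"
proof -
  have "\<forall>a\<in>S. Min (f' ` S) - c \<le> f a"
  proof
    fix a assume a: "a \<in> S"
    hence "Min (f' ` S) \<le> f' a" using assms by auto
    thus "Min (f' ` S) - c \<le> f a" using assms(3)[OF a] by linarith
  qed
  hence 1: "Min (f' ` S) - c \<le> Min (f ` S)" using assms(1,2) by simp
  have "\<forall>a\<in>S. Min (f ` S) - c \<le> f' a"
  proof
    fix a assume a: "a \<in> S"
    hence "Min (f ` S) \<le> f a" using assms by auto
    thus "Min (f ` S) - c \<le> f' a" using assms(3)[OF a] by linarith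
  qed
  hence 2: "Min (f ` S) - c \<le> Min (f' ` S)" using assms(1,2) by simp
  show ?thesis using 1 2 by linarith
qed

lemma Cmax_ge:
  assumes "finite A" "a \<in> A" shows "Cl a \<le> Cmax A Cl"
  using assms unfolding Cmax_def by auto

lemma Kmax_ge:
  assumes "finite A" "a \<in> A" shows "K a (u t) \<le> Kmax A K u t"
  using assms unfolding Kmax_def by auto

lemma Lconst_nonneg:
  assumes "finite A" "A \<noteq> {}" "\<And>a. a \<in> A \<Longrightarrow> Cl a \<ge> 0" "\<And>a u. a \<in> A \<Longrightarrow> K a u \<ge> 0"
  shows "Lconst A Cl K u T t \<ge> 0"
proof (induction "T - t" arbitrary: t rule: less_induct)
  case less
  obtain a0 where a0: "a0 \<in> A" using assms(2) by auto
  have C: "Cmax A Cl \<ge> 0" using Cmax_ge[OF assms(1) a0, of Cl] assms(3)[OF a0] by linarith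
  have K: "Kmax A K u t \<ge> 0" using Kmax_ge[OF assms(1) a0, of K u t] assms(4)[OF a0, of "u t"] by linarith
  show ?case
  proof (cases "T - 1 \<le> t")
    case True then show ?thesis using C by (simp add: Lconst.simps[of _ _ _ _ _ t])
  next
    case False
    hence "Lconst A Cl K u T (Suc t) \<ge> 0" using less by auto
    then show ?thesis using C K False by (simp add: Lconst.simps[of _ _ _ _ _ t])
  qed
qed

lemma V_lip:
  fixes R :: "'s::real_normed_vector \<Rightarrow> 'a \<Rightarrow> real" and g :: "'s \<Rightarrow> 'a \<Rightarrow> 'u \<Rightarrow> 's"
  assumes finA: "finite A" and Ane: "A \<noteq> {}"
    and K_nonneg: "\<And>a u. a \<in> A \<Longrightarrow> K a u \<ge> 0"
    and g_lip: "\<And>a u s s'. a \<in> A \<Longrightarrow> norm (g s a u - g s' a u) \<le> K a u * norm (s - s')"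
    and C_nonneg: "\<And>a. a \<in> A \<Longrightarrow> Cl a \<ge> 0"
    and R_lip: "\<And>a s s'. a \<in> A \<Longrightarrow> \<bar>R s a - R s' a\<bar> \<le> Cl a * norm (s - s')"
    and acts_in: "\<And>t. t < T \<Longrightarrow> acts t \<in> A"
    and T2: "T \<ge> 2" and Sd_fin: "finite Sd" and Sd_ne: "Sd \<noteq> {}"
    and t: "t \<le> T - 1"
  shows "\<bar>Vhat A R g u acts k T Sd (Lconst A Cl K u T) s l t - Vhat A R g u acts k T Sd (Lconst A Cl K u T) s' l t\<bar>
           \<le> Lconst A Cl K u T t * norm (s - s')"
proof -
  define L where "L = Lconst A Cl K u T"
  define Ap where "Ap = Aprime A acts k l t"
  have tT: "t < T" using t T2 by linarith
  have ApA: "Ap \<subseteq> A" using acts_in[OF tT] unfolding Ap_def Aprime_def by auto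
  have Apfin: "finite Ap" using ApA finA finite_subset by blast
  have Apne: "Ap \<noteq> {}" using Ane unfolding Ap_def Aprime_def by auto
  have Rd: "\<bar>R s a - R s' a\<bar> \<le> Cmax A Cl * norm (s - s')" if "a \<in> Ap" for a
  proof -
    have "a \<in> A" using that ApA by auto
    have "Cl a * norm (s - s') \<le> Cmax A Cl * norm (s - s')"
      by (rule mult_right_mono[OF Cmax_ge[OF finA \<open>a \<in> A\<close>]]) simp
    thus ?thesis using R_lip[OF \<open>a \<in> A\<close>, of s s'] by linarith
  qed
  show ?thesis
  proof (cases "t = T - 1")
    case True
    have eq: "\<And>x. Vhat A R g u acts k T Sd L x l t = Max ((\<lambda>a. R x a) ` Ap)"
      unfolding Ap_def by (subst Vhat.simps[of _ _ _ _ _ _ _ _ _ x l t]) (use True T2 in simp)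
    have "L t = Cmax A Cl" unfolding L_def by (subst Lconst.simps[of _ _ _ _ _ t]) (use True in simp)
    thus ?thesis unfolding L_def[symmetric] eq using max_diff[OF Apfin Apne Rd] by simp
  next
    case False
    hence tl: "t < T - 1" using t by linarith
    have Lt: "L t = Cmax A Cl + L (Suc t) * Kmax A K u t"
      using tl unfolding L_def by (simp add: Lconst.simps[of _ _ _ _ _ t])
    have L0: "L (Suc t) \<ge> 0" unfolding L_def
      by (rule Lconst_nonneg[OF finA Ane C_nonneg K_nonneg])
    define h where "h = (\<lambda>x a sd. Vhat A R g u acts k T Sd L sd (Fcount acts t l a) (Suc t)
                             + L (Suc t) * norm (sd - Fstate g u t x a))"
    have eq: "\<And>x. Vhat A R g u acts k T Sd L x l t = Max ((\<lambda>a. R x a + Min (h x a ` Sd)) ` Ap)"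
      proof -
      have c1: "\<not> T \<le> t" "t \<noteq> T - 1" using tl by auto
      show "\<And>x. ?thesis x" unfolding Ap_def h_def by (subst Vhat.simps[of _ _ _ _ _ _ _ _ _ _ l t]) (simp only: c1 if_False)
    qed
    have "\<bar>(R s a + Min (h s a ` Sd)) - (R s' a + Min (h s' a ` Sd))\<bar> \<le> L t * norm (s - s')"
      if a: "a \<in> Ap" for a
    proof -
      have aA: "a \<in> A" using a ApA by auto
      have hd: "\<bar>h s a sd - h s' a sd\<bar> \<le> L (Suc t) * norm (Fstate g u t s a - Fstate g u t s' a)" for sd
      proof -
        have "\<bar>norm (sd - Fstate g u t s a) - norm (sd - Fstate g u t s' a)\<bar>
               \<le> norm ((sd - Fstate g u t s a) - (sd - Fstate g u t s' a))"
          by (rule norm_triangle_ineq3)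
        also have "\<dots> = norm (Fstate g u t s a - Fstate g u t s' a)"
          by (simp add: norm_minus_commute)
        finally have "\<bar>norm (sd - Fstate g u t s a) - norm (sd - Fstate g u t s' a)\<bar>
               \<le> norm (Fstate g u t s a - Fstate g u t s' a)" .
        hence "L (Suc t) * \<bar>norm (sd - Fstate g u t s a) - norm (sd - Fstate g u t s' a)\<bar>
               \<le> L (Suc t) * norm (Fstate g u t s a - Fstate g u t s' a)"
          using L0 by (rule mult_left_mono)
        thus ?thesis unfolding h_def using L0
          by (simp add: abs_mult right_diff_distrib[symmetric])
      qed
      have md: "\<bar>Min (h s a ` Sd) - Min (h s' a ` Sd)\<bar> \<le> L (Suc t) * norm (Fstate g u t s a - Fstate g u t s' a)"
        by (rule min_diff[OF Sd_fin Sd_ne hd])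
      have "norm (Fstate g u t s a - Fstate g u t s' a) \<le> K a (u t) * norm (s - s')"
        unfolding Fstate_def by (rule g_lip[OF aA])
      also have "\<dots> \<le> Kmax A K u t * norm (s - s')"
        by (rule mult_right_mono[OF Kmax_ge[OF finA aA]]) simp
      finally have "L (Suc t) * norm (Fstate g u t s a - Fstate g u t s' a) \<le> L (Suc t) * (Kmax A K u t * norm (s - s'))"
        using L0 by (rule mult_left_mono)
      hence "\<bar>Min (h s a ` Sd) - Min (h s' a ` Sd)\<bar> \<le> L (Suc t) * Kmax A K u t * norm (s - s')"
        using md by simp
      moreover have "\<bar>R s a - R s' a\<bar> \<le> Cmax A Cl * norm (s - s')" using Rd[OF a] .
      ultimately show ?thesis unfolding Lt by (simp add: algebra_simps)
    qed
    thus ?thesis unfolding L_def[symmetric] eq by (rule max_diff[OF Apfin Apne])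
  qed
qed

theorem theorem2:
  fixes A :: "'a set"
    and g :: "real^'d \<Rightarrow> 'a \<Rightarrow> 'u \<Rightarrow> real^'d"
    and ginv :: "real^'d \<Rightarrow> 'a \<Rightarrow> real^'d \<Rightarrow> 'u"
    and R :: "real^'d \<Rightarrow> 'a \<Rightarrow> real"
    and K :: "'a \<Rightarrow> 'u \<Rightarrow> real"
    and Cl :: "'a \<Rightarrow> real"
    and T k :: nat
    and st :: "nat \<Rightarrow> real^'d"
    and acts :: "nat \<Rightarrow> 'a"
    and Sd :: "(real^'d) set"
    and u :: "nat \<Rightarrow> 'u"
    and L :: "nat \<Rightarrow> real"
    and V :: "real^'d \<Rightarrow> nat \<Rightarrow> nat \<Rightarrow> real"
  assumes finA: "finite A"
    and T2: "T \<ge> 2"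
    and g_bij: "\<And>s a. a \<in> A \<Longrightarrow> bij (g s a)"
    and g_inv: "\<And>s a u s'. a \<in> A \<Longrightarrow> s' = g s a u \<Longrightarrow> ginv s a s' = u"
    and K_nonneg: "\<And>a u. a \<in> A \<Longrightarrow> K a u \<ge> 0"
    and g_lip: "\<And>a u s s'. a \<in> A \<Longrightarrow> norm (g s a u - g s' a u) \<le> K a u * norm (s - s')"
    and C_nonneg: "\<And>a. a \<in> A \<Longrightarrow> Cl a \<ge> 0"
    and R_lip: "\<And>a s s'. a \<in> A \<Longrightarrow> \<bar>R s a - R s' a\<bar> \<le> Cl a * norm (s - s')"
    and acts_in: "\<And>t. t < T \<Longrightarrow> acts t \<in> A"
    and k_le: "k \<le> T"
    and Sd_fin: "finite Sd" and Sd_ne: "Sd \<noteq> {}"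
    and u_def: "u = (\<lambda>t. ginv (st t) (acts t) (st (Suc t)))"
    and L_def: "L = Lconst A Cl K u T"
    and V_def: "V = Vhat A R g u acts k T Sd L"
  shows "(\<forall>t l s a. t \<le> T - 2 \<longrightarrow> l \<le> k \<longrightarrow> a \<in> Aprime A acts k l t \<longrightarrow>
            V s l t \<ge> R s a + V (Fstate g u t s a) (Fcount acts t l a) (Suc t))
       \<and> (\<forall>l s a. l \<le> k \<longrightarrow> a \<in> Aprime A acts k l (T - 1) \<longrightarrow>
            (\<forall>s'. V s l (T - 1) \<ge> R s a + V s' k T \<and> R s a + V s' k T = R s a))"
proof -
  have Ane: "A \<noteq> {}" using acts_in[of 0] T2 by auto
  have lip: "\<And>t l s s'. t \<le> T - 1 \<Longrightarrow> \<bar>V s l t - V s' l t\<bar> \<le> L t * norm (s - s')"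
    unfolding V_def L_def
    by (rule V_lip[OF finA Ane K_nonneg g_lip C_nonneg R_lip acts_in T2 Sd_fin Sd_ne]) auto
  have P1: "V s l t \<ge> R s a + V (Fstate g u t s a) (Fcount acts t l a) (Suc t)"
    if tt: "t \<le> T - 2" and a: "a \<in> Aprime A acts k l t" for t l s a
  proof -
    define Ap where "Ap = Aprime A acts k l t"
    have tT: "t < T" using tt T2 by linarith
    have ApA: "Ap \<subseteq> A" using acts_in[OF tT] unfolding Ap_def Aprime_def by auto
    have Apfin: "finite Ap" using ApA finA finite_subset by blast
    define x where "x = Fstate g u t s a"
    define lc where "lc = Fcount acts t l a"
    define h where "h = (\<lambda>x a sd. V sd (Fcount acts t l a) (Suc t)
                             + L (Suc t) * norm (sd - Fstate g u t x a))"
    have eq: "V s l t = Max ((\<lambda>a. R s a + Min (h s a ` Sd)) ` Ap)"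
      proof -
      have c1: "\<not> T \<le> t" "t \<noteq> T - 1" using tt T2 by auto
      show ?thesis unfolding Ap_def h_def V_def by (subst Vhat.simps[of _ _ _ _ _ _ _ _ _ s l t]) (simp only: c1 if_False)
    qed
    have "\<forall>sd\<in>Sd. V x lc (Suc t) \<le> h s a sd"
    proof
      fix sd assume "sd \<in> Sd"
      have "\<bar>V x lc (Suc t) - V sd lc (Suc t)\<bar> \<le> L (Suc t) * norm (x - sd)"
        using lip tt T2 by simp
      thus "V x lc (Suc t) \<le> h s a sd" unfolding h_def x_def lc_def
        by (simp add: norm_minus_commute)
    qed
    hence "V x lc (Suc t) \<le> Min (h s a ` Sd)" using Sd_fin Sd_ne by simp
    moreover have "R s a + Min (h s a ` Sd) \<le> V s l t"
      unfolding eq using Apfin a unfolding Ap_def by (intro Max_ge) auto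
    ultimately show ?thesis unfolding x_def lc_def by linarith
  qed
  have P2: "V s l (T - 1) \<ge> R s a + V s' k T \<and> R s a + V s' k T = R s a"
    if a: "a \<in> Aprime A acts k l (T - 1)" for l s a s'
  proof -
    have tT: "T - 1 < T" using T2 by linarith
    have ApA: "Aprime A acts k l (T - 1) \<subseteq> A" using acts_in[OF tT] unfolding Aprime_def by auto
    have Apfin: "finite (Aprime A acts k l (T - 1))" using ApA finA finite_subset by blast
    have VT: "V s' k T = 0" unfolding V_def by (simp add: Vhat.simps[of _ _ _ _ _ _ _ _ _ _ _ T])
    have "V s l (T - 1) = Max ((\<lambda>a. R s a) ` Aprime A acts k l (T - 1))"
      unfolding V_def by (subst Vhat.simps[of _ _ _ _ _ _ _ _ _ s l "T - 1"]) (use T2 in simp)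
    also have "\<dots> \<ge> R s a" using Apfin a by (intro Max_ge) auto
    finally show ?thesis using VT by simp
  qed
  show ?thesis using P1 P2 by blast
qed


end
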